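(* Let $\zeta\in\mathbb{R}$ satisfy either $0<\zeta<\min\left\{\gamma^A_{\min},\dfrac{\gamma^S_{\min}}{\gamma^A_{\max}+\gamma^S_{\min}}\right\}$ or $\zeta\ge\gamma^A_{\max}+\gamma^S_{\max}$. Then the symmetric matrix $Z(\zeta)=(1-\zeta)R(\zeta I-\tilde A)^{-1}R^T+\zeta I$ is well defined and is either positive definite or negative definite.
   Context: $A\in\mathbb{R}^{n\times n}$ is symmetric positive definite, $B\in\mathbb{R}^{m\times n}$ has full row rank. $\widehat A\in\mathbb{R}^{n\times n}$, $\widehat S\in\mathbb{R}^{m\times m}$ are symmetric positive definite; $\tilde A=\widehat A^{-1/2}A\widehat A^{-1/2}$, $R=\widehat S^{-1/2}B\widehat A^{-1/2}$, $\tilde S=B\widehat A^{-1}B^T$. $\gamma^A_{\min},\gamma^A_{\max}$ are the extreme eigenvalues of $\widehat A^{-1}A$, and $\gamma^S_{\min},\gamma^S_{\max}$ those of $\widehat S^{-1}\tilde S$. Standing assumption: $1\in[\gamma^A_{\min},\gamma^A_{\max}]$. *)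

theory Defs
  imports "HOL-Analysis.Analysis"
begin

definition sym_mat :: "real^'n^'n \<Rightarrow> bool" where
  "sym_mat M \<longleftrightarrow> transpose M = M"

definition pos_def :: "real^'n^'n \<Rightarrow> bool" where
  "pos_def M \<longleftrightarrow> sym_mat M \<and> (\<forall>x. x \<noteq> 0 \<longrightarrow> 0 < x \<bullet> (M *v x))"

definition neg_def :: "real^'n^'n \<Rightarrow> bool" where
  "neg_def M \<longleftrightarrow> sym_mat M \<and> (\<forall>x. x \<noteq> 0 \<longrightarrow> x \<bullet> (M *v x) < 0)"

definition mat_sqrt :: "real^'n^'n \<Rightarrow> real^'n^'n" where
  "mat_sqrt M = (THE S. pos_def S \<and> S ** S = M)"

definition mat_inv_sqrt :: "real^'n^'n \<Rightarrow> real^'n^'n" where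
  "mat_inv_sqrt M = matrix_inv (mat_sqrt M)"

definition eigenvalues :: "real^'n^'n \<Rightarrow> real set" where
  "eigenvalues M = {l. \<exists>v. v \<noteq> 0 \<and> M *v v = l *\<^sub>R v}"

definition eig_min :: "real^'n^'n \<Rightarrow> real" where
  "eig_min M = Min (eigenvalues M)"

definition eig_max :: "real^'n^'n \<Rightarrow> real" where
  "eig_max M = Max (eigenvalues M)"

end

theory Submission
  imports Defs
begin

lemma dot_mv_transpose: "x \<bullet> ((M::real^'n^'m) *v y) = (transpose M *v x) \<bullet> y"
  by (simp add: transpose_matrix_vector dot_lmul_matrix)

lemma sym_mat_iff: "sym_mat (M::real^'n^'n) \<longleftrightarrow> (\<forall>x y. (M *v x) \<bullet> y = x \<bullet> (M *v y))"
proof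
  assume "sym_mat M" then show "\<forall>x y. (M *v x) \<bullet> y = x \<bullet> (M *v y)"
    unfolding sym_mat_def by (metis dot_mv_transpose inner_commute)
next
  assume h: "\<forall>x y. (M *v x) \<bullet> y = x \<bullet> (M *v y)"
  have "\<forall>x y. (transpose M *v x) \<bullet> y = (M *v x) \<bullet> y"
    using h by (metis dot_mv_transpose inner_commute)
  then have "\<forall>x. transpose M *v x = M *v x"
    by (metis inner_commute vector_eq_rdot)
  then show "sym_mat M" unfolding sym_mat_def by (simp add: matrix_eq)
qed

lemma inv_props: "invertible (A::real^'n^'n) \<Longrightarrow> A ** matrix_inv A = mat 1 \<and> matrix_inv A ** A = mat 1"
  unfolding matrix_inv_def invertible_def by (rule someI_ex)

lemma inv_unique_right: "(A::real^'n^'n) ** B = mat 1 \<Longrightarrow> matrix_inv A = B"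
proof -
  assume h: "A ** B = mat 1"
  then have i: "invertible A" using invertible_right_inverse by blast
  have "matrix_inv A = matrix_inv A ** (A ** B)" by (simp add: h)
  also have "\<dots> = B" using inv_props[OF i] by (simp add: matrix_mul_assoc)
  finally show ?thesis .
qed

lemma inv_unique_left: "(B::real^'n^'n) ** A = mat 1 \<Longrightarrow> matrix_inv A = B"
  using inv_unique_right matrix_left_right_inverse by blast

lemma inv_sym: "sym_mat (E::real^'n^'n) \<Longrightarrow> invertible E \<Longrightarrow> sym_mat (matrix_inv E)"
proof -
  assume s: "sym_mat E" and i: "invertible E"
  have "transpose (matrix_inv E) ** E = mat 1"
    using inv_props[OF i] s unfolding sym_mat_def
    by (metis matrix_transpose_mul transpose_mat)
  then have "matrix_inv E = transpose (matrix_inv E)" by (rule inv_unique_left)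
  then show ?thesis unfolding sym_mat_def by simp
qed

lemma pd_invertible: "pos_def (M::real^'n^'n) \<Longrightarrow> invertible M"
proof -
  assume p: "pos_def M"
  have "inj ((*v) M)"
  proof (rule injI)
    fix x y assume "M *v x = M *v y"
    then have "M *v (x - y) = 0" by (simp add: matrix_vector_mult_diff_distrib)
    then have "(x - y) \<bullet> (M *v (x - y)) = 0" by simp
    then show "x = y" using p unfolding pos_def_def by (metis eq_iff_diff_eq_0 less_irrefl)
  qed
  then show ?thesis using matrix_left_invertible_injective invertible_left_inverse by blast
qed

lemma ab_zero: fixes a b :: real assumes "\<forall>t. a * t + b * t^2 \<le> 0" shows "a = 0"
proof -
  define k where "k = 1 / (\<bar>b\<bar> + 1)"
  have k: "k > 0" "b * k > -1" unfolding k_def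
    by (auto simp: field_simps abs_if)
  have "a * (a*k) + b * (a*k)^2 \<le> 0" using assms by blast
  then have "a^2 * (k * (1 + b*k)) \<le> 0" by (simp add: algebra_simps power2_eq_square)
  moreover have "k * (1 + b*k) > 0" using k by simp
  ultimately show ?thesis
    by (metis mult_pos_pos not_le zero_less_power2)
qed

lemma mv_scale: "(A::real^'n^'m) *v (k *\<^sub>R v) = k *\<^sub>R (A *v v)"
  by (metis scaleR_matrix_vector_assoc matrix_scaleR_vector_ac)

lemma form_cs:
  fixes N :: "real^'n^'n"
  assumes s: "sym_mat N" and p: "\<forall>x. 0 \<le> x \<bullet> (N *v x)"
  shows "(u \<bullet> (N *v y))^2 \<le> (u \<bullet> (N *v u)) * (y \<bullet> (N *v y))"
proof -
  have sy: "y \<bullet> (N *v u) = u \<bullet> (N *v y)" using s unfolding sym_mat_iff by (metis inner_commute)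
  let ?a = "u \<bullet> (N *v u)" and ?b = "u \<bullet> (N *v y)" and ?c = "y \<bullet> (N *v y)"
  have q: "\<And>t. 0 \<le> ?a + 2 * t * ?b + t^2 * ?c"
  proof -
    fix t
    have "0 \<le> (u + t *\<^sub>R y) \<bullet> (N *v (u + t *\<^sub>R y))" using p by blast
    also have "\<dots> = ?a + 2 * t * ?b + t^2 * ?c"
      using sy by (simp add: matrix_vector_right_distrib inner_add_left inner_add_right
          mv_scale power2_eq_square algebra_simps)
    finally show "0 \<le> ?a + 2 * t * ?b + t^2 * ?c" .
  qed
  show ?thesis
  proof (cases "?c = 0")
    case True
    have "?b = 0"
    proof (rule ccontr)
      assume nb: "?b \<noteq> 0"
      have "0 \<le> ?a + 2 * (-(?a+1)/(2*?b)) * ?b" using q[of "-(?a+1)/(2*?b)"] True by simp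
      then show False using nb by (simp add: field_simps)
    qed
    then show ?thesis using True by simp
  next
    case False
    have c: "?c > 0" using False p by (metis order_le_less)
    have "0 \<le> ?a + 2 * (-?b/?c) * ?b + (-?b/?c)^2 * ?c" using q by blast
    then have "0 \<le> ?a - ?b^2/?c" using c by (simp add: power2_eq_square field_simps)
    then show ?thesis using c by (simp add: field_simps)
  qed
qed


lemma variational:
  fixes M :: "real^'n^'n"
  assumes s: "sym_mat M" and V: "subspace V" and inv: "\<forall>y\<in>V. M *v y \<in> V"
    and x: "x \<in> V" "norm x = 1"
    and mx: "\<forall>y\<in>V. y \<bullet> (M *v y) \<le> (x \<bullet> (M *v x)) * (y \<bullet> y)"
  shows "M *v x = (x \<bullet> (M *v x)) *\<^sub>R x"
proof -
  define l where "l = x \<bullet> (M *v x)"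
  have sym: "\<forall>u v. (M *v u) \<bullet> v = u \<bullet> (M *v v)" using s sym_mat_iff by blast
  have xx: "x \<bullet> x = 1" using x(2) by (simp add: norm_eq_1)
  have orth: "y \<bullet> (M *v x) = 0" if y: "y \<in> V" "x \<bullet> y = 0" for y
  proof -
    have xy: "x \<bullet> (M *v y) = y \<bullet> (M *v x)" using sym by (metis inner_commute)
    have "\<forall>t. (2 * (y \<bullet> (M *v x))) * t + (y \<bullet> (M *v y) - l * (y \<bullet> y)) * t^2 \<le> 0"
    proof
      fix t
      have z: "x + t *\<^sub>R y \<in> V" using V x y by (simp add: subspace_add subspace_scale)
      have 1: "(x + t *\<^sub>R y) \<bullet> (M *v (x + t *\<^sub>R y)) \<le> l * ((x + t *\<^sub>R y) \<bullet> (x + t *\<^sub>R y))"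
        using mx z l_def by blast
      have 2: "(x + t *\<^sub>R y) \<bullet> (M *v (x + t *\<^sub>R y)) = l + 2 * t * (y \<bullet> (M *v x)) + t^2 * (y \<bullet> (M *v y))"
        using xy by (simp add: matrix_vector_right_distrib inner_add_left inner_add_right mv_scale
            power2_eq_square algebra_simps l_def)
      have 3: "(x + t *\<^sub>R y) \<bullet> (x + t *\<^sub>R y) = 1 + t^2 * (y \<bullet> y)"
        using xx y(2) by (simp add: inner_add_left inner_add_right inner_commute power2_eq_square algebra_simps)
      show "(2 * (y \<bullet> (M *v x))) * t + (y \<bullet> (M *v y) - l * (y \<bullet> y)) * t^2 \<le> 0"
        using 1 unfolding 2 3 by (simp add: algebra_simps)
    qed
    then show ?thesis using ab_zero by fastforce
  qed
  define w where "w = M *v x - l *\<^sub>R x"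
  have wV: "w \<in> V" using V inv x by (simp add: w_def subspace_diff subspace_scale)
  have "x \<bullet> w = 0" using xx by (simp add: w_def inner_diff_right l_def)
  then have a: "w \<bullet> (M *v x) = 0" using orth wV by blast
  have b: "w \<bullet> x = 0" using \<open>x \<bullet> w = 0\<close> by (simp add: inner_commute)
  have "w \<bullet> w = 0" using a b by (simp add: w_def inner_diff_right)
  then have "w = 0" by simp
  then show ?thesis by (simp add: w_def l_def)
qed

lemma eigvec_exists:
  fixes M :: "real^'n^'n"
  assumes s: "sym_mat M" and V: "subspace V" and inv: "\<forall>y\<in>V. M *v y \<in> V" and nz: "V \<noteq> {0}"
  shows "\<exists>x\<in>V. norm x = 1 \<and> M *v x = (x \<bullet> (M *v x)) *\<^sub>R x \<and> (\<forall>y\<in>V. y \<bullet> (M *v y) \<le> (x \<bullet> (M *v x)) * (y \<bullet> y))"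
proof -
  let ?K = "sphere 0 1 \<inter> V"
  have K: "compact ?K" using V by (simp add: closed_subspace compact_Int_closed)
  obtain v where v: "v \<in> V" "v \<noteq> 0" using nz V subspace_0 by blast
  have "sgn v \<in> ?K" using V v by (simp add: sgn_div_norm subspace_scale norm_sgn)
  then have Kne: "?K \<noteq> {}" by blast
  have "continuous_on ?K (\<lambda>y. y \<bullet> (M *v y))"
    by (intro continuous_intros linear_continuous_on matrix_vector_mul_bounded_linear)
  then obtain x where x: "x \<in> ?K" "\<forall>y\<in>?K. y \<bullet> (M *v y) \<le> x \<bullet> (M *v x)"
    using continuous_attains_sup[OF K Kne] by blast
  have mx: "\<forall>y\<in>V. y \<bullet> (M *v y) \<le> (x \<bullet> (M *v x)) * (y \<bullet> y)"
  proof
    fix y assume y: "y \<in> V"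
    show "y \<bullet> (M *v y) \<le> (x \<bullet> (M *v x)) * (y \<bullet> y)"
    proof (cases "y = 0")
      case True then show ?thesis by simp
    next
      case False
      have sK: "sgn y \<in> ?K" using V y False by (simp add: sgn_div_norm subspace_scale norm_sgn)
      have "y \<bullet> (M *v y) = (y \<bullet> y) * (sgn y \<bullet> (M *v sgn y))"
        using False by (simp add: sgn_div_norm mv_scale power2_norm_eq_inner[symmetric] field_simps power2_eq_square)
      also have "\<dots> \<le> (y \<bullet> y) * (x \<bullet> (M *v x))" using x(2) sK by (simp add: mult_left_mono)
      finally show ?thesis by (simp add: mult.commute)
    qed
  qed
  have "norm x = 1" "x \<in> V" using x by auto
  then show ?thesis using variational[OF s V inv _ _ mx] mx by blast
qed

lemma neg_mv: "(- (M::real^'n^'m)) *v x = - (M *v x)"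
  by (simp add: matrix_vector_mult_def vec_eq_iff sum_negf)

lemma sym_neg: "sym_mat (M::real^'n^'n) \<Longrightarrow> sym_mat (- M)"
  unfolding sym_mat_iff by (simp add: neg_mv)

lemma univ_nz: "(UNIV :: (real^'n) set) \<noteq> {0}"
proof -
  have "axis (undefined::'n) (1::real) \<noteq> 0" by (simp add: axis_eq_0_iff)
  then show ?thesis by blast
qed

lemma eig_facts:
  fixes M :: "real^'n^'n"
  assumes s: "sym_mat M"
  shows "finite (eigenvalues M)" "eig_min M \<in> eigenvalues M" "eig_max M \<in> eigenvalues M"
    "\<forall>y. eig_min M * (y \<bullet> y) \<le> y \<bullet> (M *v y)" "\<forall>y. y \<bullet> (M *v y) \<le> eig_max M * (y \<bullet> y)"
proof -
  have sym: "\<forall>u v. (M *v u) \<bullet> v = u \<bullet> (M *v v)" using s sym_mat_iff by blast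
  have orth: "u \<bullet> v = 0" if "l \<noteq> m" "M *v u = l *\<^sub>R u" "M *v v = m *\<^sub>R v" for l m u v
  proof -
    have "l * (u \<bullet> v) = m * (u \<bullet> v)" using sym that by (metis inner_scaleR_left inner_scaleR_right)
    then show ?thesis using that(1) by simp
  qed
  define f where "f l = (SOME v. v \<noteq> 0 \<and> M *v v = l *\<^sub>R v)" for l
  have fl: "f l \<noteq> 0 \<and> M *v f l = l *\<^sub>R f l" if "l \<in> eigenvalues M" for l
    using that unfolding eigenvalues_def f_def by (metis (mono_tags, lifting) mem_Collect_eq someI_ex)
  have inj: "inj_on f (eigenvalues M)"
  proof (rule inj_onI)
    fix l m assume "l \<in> eigenvalues M" "m \<in> eigenvalues M" "f l = f m"
    then have "l *\<^sub>R f l = m *\<^sub>R f l" "f l \<noteq> 0" using fl by metis+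
    then show "l = m" by (simp add: scaleR_cancel_right)
  qed
  have "pairwise orthogonal (f ` eigenvalues M)"
    unfolding pairwise_def orthogonal_def using fl orth by (metis imageE)
  then have "finite (f ` eigenvalues M)" by (rule pairwise_orthogonal_imp_finite)
  then show fin: "finite (eigenvalues M)" using inj finite_imageD by blast
  obtain x where x: "norm x = 1" "M *v x = (x \<bullet> (M *v x)) *\<^sub>R x"
     "\<forall>y. y \<bullet> (M *v y) \<le> (x \<bullet> (M *v x)) * (y \<bullet> y)"
    using eigvec_exists[OF s subspace_UNIV _ univ_nz] by blast
  have xe: "x \<bullet> (M *v x) \<in> eigenvalues M" unfolding eigenvalues_def
  proof -
    have "x \<noteq> 0" using x(1) by auto
    then show "x \<bullet> (M *v x) \<in> {l. \<exists>v. v \<noteq> 0 \<and> M *v v = l *\<^sub>R v}" using x(2) by blast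
  qed
  have "\<forall>l\<in>eigenvalues M. l \<le> x \<bullet> (M *v x)"
  proof
    fix l assume "l \<in> eigenvalues M"
    then obtain v where v: "v \<noteq> 0" "M *v v = l *\<^sub>R v" unfolding eigenvalues_def by blast
    have "l * (v \<bullet> v) \<le> (x \<bullet> (M *v x)) * (v \<bullet> v)" using x(3) v by (metis inner_scaleR_right)
    then show "l \<le> x \<bullet> (M *v x)" using v(1) by simp
  qed
  then have mx: "eig_max M = x \<bullet> (M *v x)" unfolding eig_max_def using fin xe by (simp add: Max_eqI)
  show "eig_max M \<in> eigenvalues M" using mx xe by simp
  show "\<forall>y. y \<bullet> (M *v y) \<le> eig_max M * (y \<bullet> y)" using mx x by simp
  obtain z where z: "norm z = 1" "(-M) *v z = (z \<bullet> ((-M) *v z)) *\<^sub>R z"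
     "\<forall>y. y \<bullet> ((-M) *v y) \<le> (z \<bullet> ((-M) *v z)) * (y \<bullet> y)"
    using eigvec_exists[OF sym_neg[OF s] subspace_UNIV _ univ_nz] by blast
  have z2: "M *v z = (z \<bullet> (M *v z)) *\<^sub>R z" using z(2) by (simp add: neg_mv)
  have z3: "\<forall>y. (z \<bullet> (M *v z)) * (y \<bullet> y) \<le> y \<bullet> (M *v y)" using z(3) by (simp add: neg_mv)
  have ze: "z \<bullet> (M *v z) \<in> eigenvalues M" unfolding eigenvalues_def
  proof -
    have "z \<noteq> 0" using z(1) by auto
    then show "z \<bullet> (M *v z) \<in> {l. \<exists>v. v \<noteq> 0 \<and> M *v v = l *\<^sub>R v}" using z2 by blast
  qed
  have "\<forall>l\<in>eigenvalues M. z \<bullet> (M *v z) \<le> l"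
  proof
    fix l assume "l \<in> eigenvalues M"
    then obtain v where v: "v \<noteq> 0" "M *v v = l *\<^sub>R v" unfolding eigenvalues_def by blast
    have "(z \<bullet> (M *v z)) * (v \<bullet> v) \<le> l * (v \<bullet> v)" using z3 v by (metis inner_scaleR_right)
    then show "z \<bullet> (M *v z) \<le> l" using v(1) by simp
  qed
  then have mn: "eig_min M = z \<bullet> (M *v z)" unfolding eig_min_def using fin ze by (simp add: Min_eqI)
  show "eig_min M \<in> eigenvalues M" using mn ze by simp
  show "\<forall>y. eig_min M * (y \<bullet> y) \<le> y \<bullet> (M *v y)" using mn z3 by simp
qed

lemma eigbasis_sub:
  fixes M :: "real^'n^'n" assumes s: "sym_mat M"
  shows "subspace V \<Longrightarrow> (\<forall>y\<in>V. M *v y \<in> V) \<Longrightarrow> \<exists>B. B \<subseteq> V \<and> span B = V \<and> pairwise orthogonal B \<and>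
     (\<forall>b\<in>B. norm b = 1 \<and> M *v b = (b \<bullet> (M *v b)) *\<^sub>R b)"
proof (induction "dim V" arbitrary: V rule: less_induct)
  case less
  have sym: "\<forall>u v. (M *v u) \<bullet> v = u \<bullet> (M *v v)" using s sym_mat_iff by blast
  show ?case
  proof (cases "V = {0}")
    case True then show ?thesis by (intro exI[of _ "{}"]) auto
  next
    case False
    obtain x where x: "x\<in>V" "norm x = 1" "M *v x = (x \<bullet> (M *v x)) *\<^sub>R x"
      using eigvec_exists[OF s less.prems False] by blast
    have xx: "x \<bullet> x = 1" using x(2) by (simp add: norm_eq_1)
    define W where "W = {y\<in>V. x \<bullet> y = 0}"
    have Ws: "subspace W" using less.prems(1) unfolding W_def subspace_def
      by (auto simp: inner_add_right)
    have Wi: "\<forall>y\<in>W. M *v y \<in> W"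
    proof
      fix y assume y: "y \<in> W"
      have "x \<bullet> (M *v y) = (M *v x) \<bullet> y" using sym by metis
      also have "\<dots> = 0" using y x(3) unfolding W_def by (metis (mono_tags, lifting) inner_scaleR_left mem_Collect_eq mult_zero_right)
      finally show "M *v y \<in> W" using y less.prems(2) unfolding W_def by blast
    qed
    have "x \<notin> W" using xx unfolding W_def by auto
    moreover have "W \<subseteq> V" unfolding W_def by auto
    ultimately have WV: "W \<subset> V" using x(1) by blast
    have sW: "span W = W" using Ws by (rule span_eq_iff[THEN iffD2])
    have sV: "span V = V" using less.prems(1) by (rule span_eq_iff[THEN iffD2])
    have "span W \<subset> span V" unfolding sW sV by (rule WV)
    then have "dim W < dim V" by (rule dim_psubset)
    then obtain B' where B': "B' \<subseteq> W" "span B' = W" "pairwise orthogonal B'"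
      "\<forall>b\<in>B'. norm b = 1 \<and> M *v b = (b \<bullet> (M *v b)) *\<^sub>R b"
      using less.hyps[OF _ Ws Wi] by blast
    define B where "B = insert x B'"
    have BV: "B \<subseteq> V" using B'(1) x(1) unfolding B_def W_def by auto
    have "V \<subseteq> span B"
    proof
      fix y assume y: "y \<in> V"
      have "y - (x \<bullet> y) *\<^sub>R x \<in> W" unfolding W_def using y x(1) xx less.prems(1)
        by (simp add: subspace_diff subspace_scale inner_diff_right)
      then have "y - (x \<bullet> y) *\<^sub>R x \<in> span B" using B'(2) span_mono[of B' B] unfolding B_def by blast
      moreover have "(x \<bullet> y) *\<^sub>R x \<in> span B" unfolding B_def by (simp add: span_base span_scale)
      ultimately have "(y - (x \<bullet> y) *\<^sub>R x) + (x \<bullet> y) *\<^sub>R x \<in> span B" by (rule span_add)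
      then show "y \<in> span B" by simp
    qed
    moreover have "span B \<subseteq> V" using BV less.prems(1) by (simp add: span_minimal)
    ultimately have "span B = V" by blast
    moreover have "pairwise orthogonal B" unfolding B_def using B'(1,3)
      by (auto simp: pairwise_insert orthogonal_def W_def inner_commute)
    ultimately show ?thesis using BV B'(4) x unfolding B_def by blast
  qed
qed

lemma eigbasis:
  fixes M :: "real^'n^'n" assumes s: "sym_mat M"
  shows "\<exists>B. finite B \<and> span B = UNIV \<and> pairwise orthogonal B \<and>
     (\<forall>b\<in>B. norm b = 1 \<and> M *v b = (b \<bullet> (M *v b)) *\<^sub>R b)"
  using eigbasis_sub[OF s subspace_UNIV] pairwise_orthogonal_imp_finite by blast

lemma dot_sum_basis:
  fixes B :: "(real^'n) set"
  assumes "finite B" "pairwise orthogonal B" "\<forall>b\<in>B. norm b = 1" "c \<in> B"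
  shows "c \<bullet> (\<Sum>b\<in>B. g b *\<^sub>R b) = g c"
proof -
  have "c \<bullet> (\<Sum>b\<in>B. g b *\<^sub>R b) = (\<Sum>b\<in>B. g b * (c \<bullet> b))" by (simp add: inner_sum_right)
  also have "\<dots> = g c * (c \<bullet> c) + (\<Sum>b\<in>B - {c}. g b * (c \<bullet> b))"
    using assms by (simp add: sum.remove)
  also have "(\<Sum>b\<in>B - {c}. g b * (c \<bullet> b)) = 0"
    using assms(2,4) by (intro sum.neutral) (auto simp: pairwise_def orthogonal_def)
  also have "c \<bullet> c = 1" using assms(3,4) by (simp add: norm_eq_1)
  finally show ?thesis by simp
qed

lemma expand_basis:
  fixes B :: "(real^'n) set"
  assumes "finite B" "pairwise orthogonal B" "\<forall>b\<in>B. norm b = 1" "span B = UNIV"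
  shows "x = (\<Sum>b\<in>B. (b \<bullet> x) *\<^sub>R b)"
proof -
  define z where "z = x - (\<Sum>b\<in>B. (b \<bullet> x) *\<^sub>R b)"
  have "orthogonal z c" if c: "c \<in> B" for c
  proof -
    have "c \<bullet> (\<Sum>b\<in>B. (b \<bullet> x) *\<^sub>R b) = c \<bullet> x" using dot_sum_basis[OF assms(1-3) c, of "\<lambda>b. b \<bullet> x"] by simp
    then have "c \<bullet> z = 0" unfolding z_def inner_diff_right by linarith
    then show ?thesis unfolding orthogonal_def by (metis inner_commute)
  qed
  then have "orthogonal z z" using orthogonal_to_span[of z B z] assms(4) by blast
  then have "z = 0" by (simp add: orthogonal_def)
  then show ?thesis by (simp add: z_def)
qed


lemma sqrt_exists:
  fixes M :: "real^'n^'n" assumes p: "pos_def M"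
  shows "\<exists>S. pos_def S \<and> S ** S = M"
proof -
  have s: "sym_mat M" using p by (simp add: pos_def_def)
  obtain B where B: "finite B" "span B = UNIV" "pairwise orthogonal B"
     "\<forall>b\<in>B. norm b = 1 \<and> M *v b = (b \<bullet> (M *v b)) *\<^sub>R b" using eigbasis[OF s] by blast
  have Bn: "\<forall>b\<in>B. norm b = 1" using B(4) by blast
  define lam where "lam b = b \<bullet> (M *v b)" for b
  have lpos: "lam b > 0" if "b \<in> B" for b
  proof -
    have "b \<noteq> 0" using B(4) that by auto
    then show ?thesis using p unfolding pos_def_def lam_def by blast
  qed
  have sq: "sqrt (lam b) * sqrt (lam b) = lam b" if "b \<in> B" for b
    using lpos[OF that] by (metis abs_of_pos real_sqrt_mult_self)
  have Mb: "M *v b = lam b *\<^sub>R b" if "b \<in> B" for b unfolding lam_def using B(4) that by blast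
  define f where "f x = (\<Sum>b\<in>B. (sqrt (lam b) * (b \<bullet> x)) *\<^sub>R b)" for x
  have lin: "linear f"
  proof (rule linearI)
    fix x y show "f (x + y) = f x + f y" unfolding f_def
      by (simp add: inner_add_right distrib_left scaleR_add_left sum.distrib)
  next
    fix c x show "f (c *\<^sub>R x) = c *\<^sub>R f x" unfolding f_def
      by (simp add: scaleR_sum_right algebra_simps)
  qed
  define S where "S = matrix f"
  have Sx: "S *v x = f x" for x unfolding S_def using lin by (metis matrix_vector_mul(2))
  have exp: "x = (\<Sum>b\<in>B. (b \<bullet> x) *\<^sub>R b)" for x using expand_basis[OF B(1,3) Bn B(2)] .
  have dotf: "b \<bullet> f x = sqrt (lam b) * (b \<bullet> x)" if "b \<in> B" for b x
    unfolding f_def using dot_sum_basis[OF B(1,3) Bn that] .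
  have g: "f u \<bullet> v = (\<Sum>b\<in>B. sqrt (lam b) * (b \<bullet> u) * (b \<bullet> v))" for u v
    unfolding f_def by (simp add: inner_sum_left)
  have symS: "sym_mat S" unfolding sym_mat_iff Sx
  proof (intro allI)
    fix x y
    have "f x \<bullet> y = f y \<bullet> x" unfolding g by (simp add: mult_ac)
    then show "f x \<bullet> y = x \<bullet> f y" by (metis inner_commute)
  qed
  have pdS: "0 < x \<bullet> f x" if "x \<noteq> 0" for x
  proof -
    have "x \<bullet> f x = f x \<bullet> x" by (rule inner_commute)
    also have "\<dots> = (\<Sum>b\<in>B. sqrt (lam b) * (b \<bullet> x)^2)" unfolding g
      by (simp add: power2_eq_square mult_ac)
    finally have e: "x \<bullet> f x = (\<Sum>b\<in>B. sqrt (lam b) * (b \<bullet> x)^2)" .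
    have nn: "\<forall>b\<in>B. 0 \<le> sqrt (lam b) * (b \<bullet> x)^2" using lpos by (metis less_imp_le mult_nonneg_nonneg real_sqrt_ge_zero zero_le_power2)
    have "x \<bullet> f x \<noteq> 0"
    proof
      assume "x \<bullet> f x = 0"
      then have "(\<Sum>b\<in>B. sqrt (lam b) * (b \<bullet> x)^2) = 0" using e by linarith
      then have "\<forall>b\<in>B. sqrt (lam b) * (b \<bullet> x)^2 = 0" using nn by (subst (asm) sum_nonneg_eq_0_iff[OF B(1)]) auto
      then have bx: "b \<bullet> x = 0" if b: "b \<in> B" for b
      proof -
        have "sqrt (lam b) * (b \<bullet> x)^2 = 0" using b \<open>\<forall>b\<in>B. sqrt (lam b) * (b \<bullet> x)^2 = 0\<close> by blast
        then show ?thesis using lpos[OF b] by simp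
      qed
      have "x = (\<Sum>b\<in>B. (b \<bullet> x) *\<^sub>R b)" by (rule exp)
      also have "\<dots> = (\<Sum>b\<in>B. 0)" by (rule sum.cong) (simp_all add: bx)
      finally have "x = 0" by simp
      then show False using that by simp
    qed
    moreover have "0 \<le> x \<bullet> f x" unfolding e using nn by (simp add: sum_nonneg)
    ultimately show ?thesis by simp
  qed
  have "S ** S = M"
  proof (subst matrix_eq, intro allI)
    fix x
    have "(S ** S) *v x = f (f x)" by (simp add: matrix_vector_mul_assoc[symmetric] Sx)
    also have "\<dots> = (\<Sum>b\<in>B. (lam b * (b \<bullet> x)) *\<^sub>R b)"
      unfolding f_def[of "f x"] using dotf lpos
      by (intro sum.cong) (auto simp: mult.assoc[symmetric] abs_of_pos)
    also have "\<dots> = M *v (\<Sum>b\<in>B. (b \<bullet> x) *\<^sub>R b)"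
      by (simp add: vec.sum mv_scale Mb mult.commute)
    also have "\<dots> = M *v x" by (simp only: exp[of x, symmetric])
    finally show "(S ** S) *v x = M *v x" .
  qed
  moreover have "pos_def S" unfolding pos_def_def using symS pdS Sx by simp
  ultimately show ?thesis by blast
qed

lemma sqrt_on_eig:
  fixes S M :: "real^'n^'n"
  assumes p: "pos_def S" and sq: "S ** S = M" and e: "M *v b = l *\<^sub>R b" and l: "l > 0"
  shows "S *v b = sqrt l *\<^sub>R b"
proof -
  define w where "w = S *v b - sqrt l *\<^sub>R b"
  have "S *v w + sqrt l *\<^sub>R w = (S ** S) *v b - (sqrt l * sqrt l) *\<^sub>R b"
    unfolding w_def by (simp add: matrix_vector_mult_diff_distrib mv_scale matrix_vector_mul_assoc[symmetric] algebra_simps)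
  also have "\<dots> = 0" using sq e l by simp
  finally have z: "S *v w + sqrt l *\<^sub>R w = 0" .
  have "w = 0"
  proof (rule ccontr)
    assume nz: "w \<noteq> 0"
    have "w \<bullet> (S *v w + sqrt l *\<^sub>R w) = w \<bullet> (S *v w) + sqrt l * (w \<bullet> w)" by (simp add: inner_add_right)
    moreover have "w \<bullet> (S *v w) > 0" using p nz unfolding pos_def_def by blast
    moreover have "sqrt l * (w \<bullet> w) > 0" using l nz by simp
    ultimately show False using z by simp
  qed
  then show ?thesis by (simp add: w_def)
qed

lemma sqrt_unique:
  fixes M S1 S2 :: "real^'n^'n"
  assumes p: "pos_def M" and p1: "pos_def S1" "S1 ** S1 = M" and p2: "pos_def S2" "S2 ** S2 = M"
  shows "S1 = S2"
proof -
  have s: "sym_mat M" using p by (simp add: pos_def_def)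
  obtain B where B: "finite B" "span B = UNIV" "pairwise orthogonal B"
     "\<forall>b\<in>B. norm b = 1 \<and> M *v b = (b \<bullet> (M *v b)) *\<^sub>R b" using eigbasis[OF s] by blast
  have Bn: "\<forall>b\<in>B. norm b = 1" using B(4) by blast
  have eq: "S1 *v b = S2 *v b" if b: "b \<in> B" for b
  proof -
    have "b \<noteq> 0" using B(4) that by auto
    then have l: "b \<bullet> (M *v b) > 0" using p unfolding pos_def_def by blast
    show ?thesis using sqrt_on_eig[OF p1 _ l] sqrt_on_eig[OF p2 _ l] B(4) b by simp
  qed
  show ?thesis
  proof (subst matrix_eq, intro allI)
    fix x
    have exp: "x = (\<Sum>b\<in>B. (b \<bullet> x) *\<^sub>R b)" using expand_basis[OF B(1,3) Bn B(2)] .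
    have "S1 *v x = S1 *v (\<Sum>b\<in>B. (b \<bullet> x) *\<^sub>R b)" using exp by (rule arg_cong)
    also have "\<dots> = (\<Sum>b\<in>B. (b \<bullet> x) *\<^sub>R (S1 *v b))" by (simp add: vec.sum mv_scale)
    also have "\<dots> = (\<Sum>b\<in>B. (b \<bullet> x) *\<^sub>R (S2 *v b))" using eq by simp
    also have "\<dots> = S2 *v (\<Sum>b\<in>B. (b \<bullet> x) *\<^sub>R b)" by (simp add: vec.sum mv_scale)
    also have "\<dots> = S2 *v x" using exp[symmetric] by (rule arg_cong)
    finally show "S1 *v x = S2 *v x" .
  qed
qed

lemma mat_sqrt_props:
  fixes M :: "real^'n^'n" assumes p: "pos_def M"
  shows "pos_def (mat_sqrt M) \<and> mat_sqrt M ** mat_sqrt M = M"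
proof -
  have "\<exists>!S. pos_def S \<and> S ** S = M" using sqrt_exists[OF p] sqrt_unique[OF p] by blast
  then show ?thesis unfolding mat_sqrt_def by (rule theI')
qed


lemma nz_form_invertible:
  fixes M :: "real^'n^'n" assumes h: "\<forall>x. x \<noteq> 0 \<longrightarrow> x \<bullet> (M *v x) \<noteq> 0"
  shows "invertible M"
proof -
  have "inj ((*v) M)"
  proof (rule injI)
    fix x y assume "M *v x = M *v y"
    then have "M *v (x - y) = 0" by (simp add: matrix_vector_mult_diff_distrib)
    then have "(x - y) \<bullet> (M *v (x - y)) = 0" by simp
    then show "x = y" using h by (metis eq_iff_diff_eq_0)
  qed
  then show ?thesis using matrix_left_invertible_injective invertible_left_inverse by blast
qed

lemma smul_mv: "(c *\<^sub>R (M::real^'n^'m)) *v x = c *\<^sub>R (M *v x)"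
  by (rule scaleR_matrix_vector_assoc[symmetric])

lemma Z_mv:
  fixes R :: "real^'n^'m" and K :: "real^'n^'n"
  shows "(c *\<^sub>R (R ** K ** transpose R) + d *\<^sub>R mat 1) *v x
     = c *\<^sub>R (R *v (K *v (transpose R *v x))) + d *\<^sub>R x"
  by (simp add: matrix_vector_mult_add_rdistrib smul_mv matrix_vector_mul_assoc[symmetric])

lemma Z_sym:
  fixes R :: "real^'n^'m" and K :: "real^'n^'n"
  assumes "sym_mat K"
  shows "sym_mat (c *\<^sub>R (R ** K ** transpose R) + d *\<^sub>R mat 1)"
  unfolding sym_mat_iff Z_mv
proof (intro allI)
  fix x y
  have k: "\<forall>u v. (K *v u) \<bullet> v = u \<bullet> (K *v v)" using assms sym_mat_iff by blast
  have "(R *v (K *v (transpose R *v x))) \<bullet> y = (K *v (transpose R *v x)) \<bullet> (transpose R *v y)"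
    by (metis dot_mv_transpose inner_commute)
  also have "\<dots> = (transpose R *v x) \<bullet> (K *v (transpose R *v y))" using k by blast
  also have "\<dots> = x \<bullet> (R *v (K *v (transpose R *v y)))"
    by (metis dot_mv_transpose transpose_transpose)
  finally have e: "(R *v (K *v (transpose R *v x))) \<bullet> y = x \<bullet> (R *v (K *v (transpose R *v y)))" .
  show "(c *\<^sub>R (R *v (K *v (transpose R *v x))) + d *\<^sub>R x) \<bullet> y =
           x \<bullet> (c *\<^sub>R (R *v (K *v (transpose R *v y))) + d *\<^sub>R y)"
    by (simp add: inner_add_left inner_add_right e del: transpose_matrix_vector)
qed

lemma Z_q:
  fixes R :: "real^'n^'m" and K :: "real^'n^'n"
  shows "x \<bullet> ((c *\<^sub>R (R ** K ** transpose R) + d *\<^sub>R mat 1) *v x)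
     = c * ((transpose R *v x) \<bullet> (K *v (transpose R *v x))) + d * (x \<bullet> x)"
proof -
  have "x \<bullet> (R *v (K *v (transpose R *v x))) = (transpose R *v x) \<bullet> (K *v (transpose R *v x))"
    by (rule dot_mv_transpose)
  then show ?thesis unfolding Z_mv by (simp add: inner_add_right)
qed

lemma inv_sqrt_props:
  fixes M :: "real^'n^'n" assumes p: "pos_def M"
  shows "mat_inv_sqrt M ** mat_sqrt M = mat 1" "mat_sqrt M ** mat_inv_sqrt M = mat 1"
    "transpose (mat_inv_sqrt M) = mat_inv_sqrt M" "matrix_inv M = mat_inv_sqrt M ** mat_inv_sqrt M"
    "\<forall>x. x \<noteq> 0 \<longrightarrow> mat_inv_sqrt M *v x \<noteq> 0"
proof -
  let ?S = "mat_sqrt M" and ?P = "mat_inv_sqrt M"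
  have S: "pos_def ?S" "?S ** ?S = M" using mat_sqrt_props[OF p] by auto
  have i: "invertible ?S" using pd_invertible[OF S(1)] .
  show 1: "?P ** ?S = mat 1" "?S ** ?P = mat 1" using inv_props[OF i] unfolding mat_inv_sqrt_def by auto
  have "sym_mat ?P" unfolding mat_inv_sqrt_def using inv_sym[OF _ i] S(1) by (simp add: pos_def_def)
  then show "transpose ?P = ?P" by (simp add: sym_mat_def)
  have "M ** (?P ** ?P) = ?S ** (?S ** ?P) ** ?P" using S(2) by (simp add: matrix_mul_assoc)
  also have "\<dots> = mat 1" using 1 by simp
  finally show "matrix_inv M = ?P ** ?P" by (rule inv_unique_right)
  show "\<forall>x. x \<noteq> 0 \<longrightarrow> ?P *v x \<noteq> 0"
  proof (intro allI impI)
    fix x :: "real^'n" assume "x \<noteq> 0"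
    moreover have "x = ?S *v (?P *v x)" using 1 by (simp add: matrix_vector_mul_assoc)
    ultimately show "?P *v x \<noteq> 0" by auto
  qed
qed

lemma eig_sim:
  fixes P S X :: "real^'n^'n"
  assumes 1: "P ** S = mat 1" and 2: "S ** P = mat 1"
  shows "eigenvalues (P ** P ** X) = eigenvalues (P ** X ** P)"
proof -
  have PS: "P *v (S *v v) = v" for v using 1 by (simp add: matrix_vector_mul_assoc)
  have SP: "S *v (P *v v) = v" for v using 2 by (simp add: matrix_vector_mul_assoc)
  show ?thesis unfolding eigenvalues_def
  proof (intro Collect_cong iffI)
    fix l assume "\<exists>v. v \<noteq> 0 \<and> (P ** P ** X) *v v = l *\<^sub>R v"
    then obtain v where v: "v \<noteq> 0" "P *v (P *v (X *v v)) = l *\<^sub>R v"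
      by (auto simp: matrix_vector_mul_assoc[symmetric])
    have "S *v v \<noteq> 0" using v(1) PS by (metis matrix_vector_mult_0_right)
    moreover have "(P ** X ** P) *v (S *v v) = l *\<^sub>R (S *v v)"
    proof -
      have "(P ** X ** P) *v (S *v v) = P *v (X *v v)" by (simp add: matrix_vector_mul_assoc[symmetric] PS)
      also have "\<dots> = S *v (P *v (P *v (X *v v)))" by (simp add: SP)
      also have "\<dots> = l *\<^sub>R (S *v v)" using v(2) by (simp add: mv_scale)
      finally show ?thesis .
    qed
    ultimately show "\<exists>v. v \<noteq> 0 \<and> (P ** X ** P) *v v = l *\<^sub>R v" by blast
  next
    fix l assume "\<exists>v. v \<noteq> 0 \<and> (P ** X ** P) *v v = l *\<^sub>R v"
    then obtain w where w: "w \<noteq> 0" "P *v (X *v (P *v w)) = l *\<^sub>R w"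
      by (auto simp: matrix_vector_mul_assoc[symmetric])
    have "P *v w \<noteq> 0" using w(1) SP by (metis matrix_vector_mult_0_right)
    moreover have "(P ** P ** X) *v (P *v w) = l *\<^sub>R (P *v w)"
      using w(2) by (simp add: matrix_vector_mul_assoc[symmetric] mv_scale)
    ultimately show "\<exists>v. v \<noteq> 0 \<and> (P ** P ** X) *v v = l *\<^sub>R v" by blast
  qed
qed

lemma eig_min_pos:
  fixes M :: "real^'n^'n" assumes s: "sym_mat M" and p: "\<forall>x. x \<noteq> 0 \<longrightarrow> 0 < x \<bullet> (M *v x)"
  shows "0 < eig_min M"
proof -
  obtain v where v: "v \<noteq> 0" "M *v v = eig_min M *\<^sub>R v" using eig_facts(2)[OF s] unfolding eigenvalues_def by blast
  have "0 < v \<bullet> (M *v v)" using p v by blast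
  then have "0 < eig_min M * (v \<bullet> v)" using v by simp
  moreover have "0 < v \<bullet> v" using v by simp
  ultimately show ?thesis by (simp add: zero_less_mult_iff)
qed


lemma some_nz: "\<exists>x::real^'n. x \<noteq> 0" using univ_nz by blast

lemma case1:
  fixes At :: "real^'n^'n" and R :: "real^'n^'m"
  assumes At_sym: "sym_mat At" and lowA: "\<forall>x. a * (x \<bullet> x) \<le> x \<bullet> (At *v x)"
    and upA: "\<forall>x. x \<bullet> (At *v x) \<le> b * (x \<bullet> x)"
    and lowT: "\<forall>x. c * (x \<bullet> x) \<le> (transpose R *v x) \<bullet> (transpose R *v x)"
    and z: "0 < \<zeta>" "\<zeta> < a" "\<zeta> * (b + c) < c" and a1: "a \<le> 1"
  shows "invertible (\<zeta> *\<^sub>R mat 1 - At) \<and>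
     neg_def ((1 - \<zeta>) *\<^sub>R (R ** matrix_inv (\<zeta> *\<^sub>R mat 1 - At) ** transpose R) + \<zeta> *\<^sub>R mat 1)"
proof -
  define E where "E = \<zeta> *\<^sub>R mat 1 - At"
  define K where "K = matrix_inv E"
  have Ev: "E *v x = \<zeta> *\<^sub>R x - At *v x" for x unfolding E_def by (simp add: matrix_vector_mult_diff_rdistrib smul_mv)
  have qE: "x \<bullet> (E *v x) = \<zeta> * (x \<bullet> x) - x \<bullet> (At *v x)" for x by (simp add: Ev inner_diff_right)
  have symA: "\<forall>u v. (At *v u) \<bullet> v = u \<bullet> (At *v v)" using At_sym sym_mat_iff by blast
  have E_sym: "sym_mat E" unfolding sym_mat_iff Ev using symA by (simp add: inner_diff_left inner_diff_right)
  obtain x0 :: "real^'n" where x0: "x0 \<noteq> 0" using some_nz by blast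
  have "a * (x0 \<bullet> x0) \<le> b * (x0 \<bullet> x0)" using lowA upA order_trans by blast
  then have ab: "a \<le> b" using x0 by simp
  have Eneg: "x \<bullet> (E *v x) < 0" if "x \<noteq> 0" for x
  proof -
    have "(\<zeta> - a) * (x \<bullet> x) < 0" using z that by (simp add: mult_neg_pos)
    then show ?thesis unfolding qE using lowA by (smt (verit) left_diff_distrib)
  qed
  have Einv: "invertible E" by (rule nz_form_invertible) (use Eneg in force)
  have EK: "E *v (K *v u) = u" for u using inv_props[OF Einv] unfolding K_def by (simp add: matrix_vector_mul_assoc)
  have K_sym: "sym_mat K" unfolding K_def by (rule inv_sym[OF E_sym Einv])
  have bnd: "(b - \<zeta>) * (u \<bullet> (K *v u)) \<le> - (u \<bullet> u)" for u
  proof -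
    define y where "y = K *v u"
    have Ny: "(- E) *v y = - u" unfolding y_def by (simp add: neg_mv EK)
    have nn: "\<forall>v. 0 \<le> v \<bullet> ((- E) *v v)"
    proof
      fix v have "v \<bullet> (E *v v) \<le> 0" using Eneg by (cases "v = 0") (auto simp: less_imp_le)
      then show "0 \<le> v \<bullet> ((- E) *v v)" by (simp add: neg_mv)
    qed
    have cs: "(u \<bullet> ((- E) *v y))^2 \<le> (u \<bullet> ((- E) *v u)) * (y \<bullet> ((- E) *v y))"
      by (rule form_cs[OF sym_neg[OF E_sym] nn])
    have 1: "u \<bullet> ((- E) *v y) = - (u \<bullet> u)" using Ny by simp
    have 2: "y \<bullet> ((- E) *v y) = - (u \<bullet> (K *v u))" using Ny unfolding y_def by (simp add: inner_commute)
    have 3: "u \<bullet> ((- E) *v u) \<le> (b - \<zeta>) * (u \<bullet> u)" using upA by (simp add: neg_mv qE algebra_simps)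
    have q0: "0 \<le> - (u \<bullet> (K *v u))" using nn 2 by metis
    have "(u \<bullet> u) * (u \<bullet> u) \<le> ((b - \<zeta>) * (u \<bullet> u)) * (- (u \<bullet> (K *v u)))"
      using cs 3 q0 unfolding 1 2 by (smt (verit) mult_right_mono power2_eq_square minus_mult_minus)
    then have "(u \<bullet> u) * (u \<bullet> u) \<le> (u \<bullet> u) * ((b - \<zeta>) * (- (u \<bullet> (K *v u))))" by (simp add: mult_ac)
    then have "u \<bullet> u = 0 \<or> (u \<bullet> u) \<le> (b - \<zeta>) * (- (u \<bullet> (K *v u)))"
      by (metis inner_ge_zero mult_le_cancel_left_pos order_le_less)
    then show ?thesis by (auto simp: algebra_simps)
  qed
  define Z where "Z = (1 - \<zeta>) *\<^sub>R (R ** K ** transpose R) + \<zeta> *\<^sub>R mat 1"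
  have "neg_def Z" unfolding neg_def_def
  proof (intro conjI allI impI)
    show "sym_mat Z" unfolding Z_def by (rule Z_sym[OF K_sym])
  next
    fix x :: "real^'m" assume x: "x \<noteq> 0"
    define u where "u = transpose R *v x"
    define p where "p = u \<bullet> (K *v u)"
    define s where "s = x \<bullet> x"
    define U where "U = u \<bullet> u"
    have s0: "0 < s" using x unfolding s_def by simp
    have Zq: "x \<bullet> (Z *v x) = (1 - \<zeta>) * p + \<zeta> * s" unfolding Z_def Z_q p_def u_def s_def ..
    have cU: "c * s \<le> U" using lowT unfolding U_def u_def s_def by blast
    have bp: "(b - \<zeta>) * p \<le> - U" unfolding p_def U_def by (rule bnd)
    have bz: "0 < b - \<zeta>" using z ab by simp
    have z1: "0 \<le> 1 - \<zeta>" using z a1 by simp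
    have k1: "(1 - \<zeta>) * ((b - \<zeta>) * p) \<le> - ((1 - \<zeta>) * U)"
      using mult_left_mono[OF bp z1] by simp
    have k2: "(1 - \<zeta>) * (c * s) \<le> (1 - \<zeta>) * U" using mult_left_mono[OF cU z1] .
    have "\<zeta> * (b - \<zeta>) < (1 - \<zeta>) * c"
    proof -
      have "\<zeta> * (b - \<zeta>) < \<zeta> * b" using z by simp
      also have "\<dots> < (1 - \<zeta>) * c" using z(3) by (simp add: algebra_simps)
      finally show ?thesis .
    qed
    then have "s * (\<zeta> * (b - \<zeta>) - (1 - \<zeta>) * c) < 0" using s0 by (simp add: mult_pos_neg)
    then have k3: "\<zeta> * (b - \<zeta>) * s - (1 - \<zeta>) * (c * s) < 0" by (simp add: algebra_simps)
    have eq: "(b - \<zeta>) * (x \<bullet> (Z *v x)) = (1 - \<zeta>) * ((b - \<zeta>) * p) + \<zeta> * (b - \<zeta>) * s"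
      unfolding Zq by (simp add: algebra_simps)
    have "(b - \<zeta>) * (x \<bullet> (Z *v x)) < 0" using eq k1 k2 k3 by linarith
    then show "x \<bullet> (Z *v x) < 0" using bz by (simp add: mult_less_0_iff)
  qed
  then show ?thesis using Einv unfolding Z_def K_def E_def by blast
qed


lemma case2:
  fixes At :: "real^'n^'n" and R :: "real^'n^'m"
  assumes At_sym: "sym_mat At"
    and upA: "\<forall>x. x \<bullet> (At *v x) \<le> b * (x \<bullet> x)"
    and upT: "\<forall>x. (transpose R *v x) \<bullet> (transpose R *v x) \<le> d * (x \<bullet> x)"
    and z: "b + d \<le> \<zeta>" and b1: "1 \<le> b" and d0: "0 < d"
  shows "invertible (\<zeta> *\<^sub>R mat 1 - At) \<and>
     pos_def ((1 - \<zeta>) *\<^sub>R (R ** matrix_inv (\<zeta> *\<^sub>R mat 1 - At) ** transpose R) + \<zeta> *\<^sub>R mat 1)"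
proof -
  define E where "E = \<zeta> *\<^sub>R mat 1 - At"
  define K where "K = matrix_inv E"
  define \<alpha> where "\<alpha> = \<zeta> - b"
  have al: "d \<le> \<alpha>" "0 < \<alpha>" using z d0 unfolding \<alpha>_def by auto
  have Ev: "E *v x = \<zeta> *\<^sub>R x - At *v x" for x unfolding E_def by (simp add: matrix_vector_mult_diff_rdistrib smul_mv)
  have qE: "x \<bullet> (E *v x) = \<zeta> * (x \<bullet> x) - x \<bullet> (At *v x)" for x by (simp add: Ev inner_diff_right)
  have symA: "\<forall>u v. (At *v u) \<bullet> v = u \<bullet> (At *v v)" using At_sym sym_mat_iff by blast
  have E_sym: "sym_mat E" unfolding sym_mat_iff Ev using symA by (simp add: inner_diff_left inner_diff_right)
  have Elow: "\<alpha> * (x \<bullet> x) \<le> x \<bullet> (E *v x)" for x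
    unfolding qE \<alpha>_def using upA by (simp add: algebra_simps)
  have Epos: "0 < x \<bullet> (E *v x)" if "x \<noteq> 0" for x
  proof -
    have "0 < \<alpha> * (x \<bullet> x)" using al that by simp
    then show ?thesis using Elow[of x] by linarith
  qed
  have Einv: "invertible E" by (rule nz_form_invertible) (use Epos in force)
  have EK: "E *v (K *v u) = u" for u using inv_props[OF Einv] unfolding K_def by (simp add: matrix_vector_mul_assoc)
  have K_sym: "sym_mat K" unfolding K_def by (rule inv_sym[OF E_sym Einv])
  have bnd: "\<alpha> * (u \<bullet> (K *v u)) \<le> u \<bullet> u" for u
  proof -
    define y where "y = K *v u"
    define p where "p = u \<bullet> y"
    have Ey: "E *v y = u" unfolding y_def by (rule EK)
    have pE: "p = y \<bullet> (E *v y)" unfolding p_def Ey by (simp add: inner_commute)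
    have h2: "\<alpha> * (y \<bullet> y) \<le> p" unfolding pE by (rule Elow)
    have p0: "0 \<le> p" using h2 al by (smt (verit) inner_ge_zero mult_nonneg_nonneg)
    have h1: "p * p \<le> (u \<bullet> u) * (y \<bullet> y)"
    proof -
      have "\<bar>p\<bar> \<le> norm u * norm y" unfolding p_def by (rule Cauchy_Schwarz_ineq2)
      then have "p * p \<le> (norm u * norm y) * (norm u * norm y)" using p0 by (simp add: mult_mono)
      then show ?thesis by (simp add: power2_norm_eq_inner[symmetric] power2_eq_square mult_ac)
    qed
    have "\<alpha> * (p * p) \<le> (u \<bullet> u) * (\<alpha> * (y \<bullet> y))" using mult_left_mono[OF h1 less_imp_le[OF al(2)]] by (simp add: mult_ac)
    also have "\<dots> \<le> (u \<bullet> u) * p" using h2 by (simp add: mult_left_mono)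
    finally have "(\<alpha> * p) * p \<le> (u \<bullet> u) * p" by (simp add: mult_ac)
    then have "p = 0 \<or> \<alpha> * p \<le> u \<bullet> u" using p0 by (metis mult_le_cancel_right_pos order_le_less)
    then show ?thesis using p_def y_def by auto
  qed
  define Z where "Z = (1 - \<zeta>) *\<^sub>R (R ** K ** transpose R) + \<zeta> *\<^sub>R mat 1"
  have "pos_def Z" unfolding pos_def_def
  proof (intro conjI allI impI)
    show "sym_mat Z" unfolding Z_def by (rule Z_sym[OF K_sym])
  next
    fix x :: "real^'m" assume x: "x \<noteq> 0"
    define u where "u = transpose R *v x"
    define p where "p = u \<bullet> (K *v u)"
    define s where "s = x \<bullet> x"
    define U where "U = u \<bullet> u"
    have s0: "0 < s" using x unfolding s_def by simp
    have Zq: "x \<bullet> (Z *v x) = (1 - \<zeta>) * p + \<zeta> * s" unfolding Z_def Z_q p_def u_def s_def ..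
    have dU: "U \<le> d * s" using upT unfolding U_def u_def s_def by blast
    have ap: "\<alpha> * p \<le> U" unfolding p_def U_def by (rule bnd)
    have z1: "1 - \<zeta> \<le> 0" using z b1 d0 by simp
    have k1: "(1 - \<zeta>) * U \<le> (1 - \<zeta>) * (\<alpha> * p)" using mult_left_mono_neg[OF ap z1] .
    have k2: "(1 - \<zeta>) * (d * s) \<le> (1 - \<zeta>) * U" using mult_left_mono_neg[OF dU z1] .
    have k3: "\<zeta> * (d * s) \<le> \<zeta> * (\<alpha> * s)" using z d0 b1 al s0 by (intro mult_left_mono) auto
    have k4: "0 < d * s" using d0 s0 by simp
    have eq: "\<alpha> * (x \<bullet> (Z *v x)) = (1 - \<zeta>) * (\<alpha> * p) + \<zeta> * (\<alpha> * s)"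
      unfolding Zq by (simp add: algebra_simps)
    have eq2: "(1 - \<zeta>) * (d * s) + \<zeta> * (d * s) = d * s" by (simp add: algebra_simps)
    have "0 < \<alpha> * (x \<bullet> (Z *v x))" using eq eq2 k1 k2 k3 k4 by linarith
    then show "0 < x \<bullet> (Z *v x)" using al by (simp add: zero_less_mult_iff)
  qed
  then show ?thesis using Einv unfolding Z_def K_def E_def by blast
qed


theorem lemma4:
  fixes A Ahat :: "real^'n^'n" and B :: "real^'n^'m" and Shat :: "real^'m^'m"
    and \<zeta> :: real
  assumes "pos_def A" and "rank B = CARD('m)"
    and "pos_def Ahat" and "pos_def Shat"
    and "eig_min (matrix_inv Ahat ** A) \<le> 1" and "1 \<le> eig_max (matrix_inv Ahat ** A)"
    and "(0 < \<zeta> \<and> \<zeta> < min (eig_min (matrix_inv Ahat ** A))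
            (eig_min (matrix_inv Shat ** (B ** matrix_inv Ahat ** transpose B)) /
             (eig_max (matrix_inv Ahat ** A) + eig_min (matrix_inv Shat ** (B ** matrix_inv Ahat ** transpose B)))))
         \<or> \<zeta> \<ge> eig_max (matrix_inv Ahat ** A) + eig_max (matrix_inv Shat ** (B ** matrix_inv Ahat ** transpose B))"
  shows "let At = mat_inv_sqrt Ahat ** A ** mat_inv_sqrt Ahat;
             R = mat_inv_sqrt Shat ** B ** mat_inv_sqrt Ahat;
             Z = (1 - \<zeta>) *\<^sub>R (R ** matrix_inv (\<zeta> *\<^sub>R mat 1 - At) ** transpose R) + \<zeta> *\<^sub>R mat 1
         in invertible (\<zeta> *\<^sub>R mat 1 - At) \<and> (pos_def Z \<or> neg_def Z)"
proof -
  let ?P = "mat_inv_sqrt Ahat" and ?Q = "mat_inv_sqrt Shat"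
  note PA = inv_sqrt_props[OF assms(3)] and QS = inv_sqrt_props[OF assms(4)]
  define At where "At = ?P ** A ** ?P"
  define R where "R = ?Q ** B ** ?P"
  define T where "T = R ** transpose R"
  have symA: "transpose A = A" using assms(1) by (simp add: pos_def_def sym_mat_def)
  have At_sym: "sym_mat At" unfolding sym_mat_def At_def using PA(3) symA
    by (simp add: matrix_transpose_mul matrix_mul_assoc)
  have At_pd: "\<forall>x. x \<noteq> 0 \<longrightarrow> 0 < x \<bullet> (At *v x)"
  proof (intro allI impI)
    fix x :: "real^'n" assume x: "x \<noteq> 0"
    have "x \<bullet> (At *v x) = x \<bullet> (?P *v (A *v (?P *v x)))" unfolding At_def by (simp add: matrix_vector_mul_assoc matrix_mul_assoc)
    also have "\<dots> = (?P *v x) \<bullet> (A *v (?P *v x))" using PA(3) dot_mv_transpose by metis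
    finally show "0 < x \<bullet> (At *v x)" using assms(1) PA(5) x unfolding pos_def_def by auto
  qed
  have eA: "eigenvalues (matrix_inv Ahat ** A) = eigenvalues At" unfolding At_def PA(4)
    by (rule eig_sim[OF PA(1,2)])
  have TQ: "T = ?Q ** (B ** matrix_inv Ahat ** transpose B) ** ?Q"
    unfolding T_def R_def PA(4) using PA(3) QS(3) by (simp add: matrix_transpose_mul matrix_mul_assoc)
  have eS: "eigenvalues (matrix_inv Shat ** (B ** matrix_inv Ahat ** transpose B)) = eigenvalues T"
    unfolding TQ QS(4) by (rule eig_sim[OF QS(1,2)])
  have T_sym: "sym_mat T" unfolding sym_mat_def T_def by (simp add: matrix_transpose_mul)
  have Bi: "inj ((*v) (transpose B))" using assms(2) rank_transpose full_rank_injective by metis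
  have Tq: "x \<bullet> (T *v x) = (transpose R *v x) \<bullet> (transpose R *v x)" for x
  proof -
    have "x \<bullet> (T *v x) = x \<bullet> (R *v (transpose R *v x))" unfolding T_def by (simp add: matrix_vector_mul_assoc del: transpose_matrix_vector)
    also have "\<dots> = (transpose R *v x) \<bullet> (transpose R *v x)" by (rule dot_mv_transpose)
    finally show ?thesis .
  qed
  have RT: "transpose R *v x = ?P *v (transpose B *v (?Q *v x))" for x
    unfolding R_def using PA(3) QS(3)
    by (simp add: matrix_transpose_mul matrix_vector_mul_assoc del: transpose_matrix_vector)
  have T_pd: "\<forall>x. x \<noteq> 0 \<longrightarrow> 0 < x \<bullet> (T *v x)"
  proof (intro allI impI)
    fix x :: "real^'m" assume x: "x \<noteq> 0"
    have "?Q *v x \<noteq> 0" using QS(5) x by blast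
    then have "transpose B *v (?Q *v x) \<noteq> 0" using Bi by (metis injD matrix_vector_mult_0_right)
    then have "transpose R *v x \<noteq> 0" unfolding RT using PA(5) by blast
    then show "0 < x \<bullet> (T *v x)" unfolding Tq by simp
  qed
  define a where "a = eig_min At"
  define b where "b = eig_max At"
  define c where "c = eig_min T"
  define d where "d = eig_max T"
  have ea: "eig_min (matrix_inv Ahat ** A) = a" unfolding a_def eig_min_def eA ..
  have eb: "eig_max (matrix_inv Ahat ** A) = b" unfolding b_def eig_max_def eA ..
  have ec: "eig_min (matrix_inv Shat ** (B ** matrix_inv Ahat ** transpose B)) = c" unfolding c_def eig_min_def eS ..
  have ed: "eig_max (matrix_inv Shat ** (B ** matrix_inv Ahat ** transpose B)) = d" unfolding d_def eig_max_def eS ..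
  note fA = eig_facts[OF At_sym, folded a_def b_def] and fT = eig_facts[OF T_sym, folded c_def d_def]
  have a0: "0 < a" unfolding a_def by (rule eig_min_pos[OF At_sym At_pd])
  have c0: "0 < c" unfolding c_def by (rule eig_min_pos[OF T_sym T_pd])
  obtain x0 :: "real^'m" where x0: "x0 \<noteq> 0" using some_nz by blast
  have "c * (x0 \<bullet> x0) \<le> d * (x0 \<bullet> x0)" using fT(4,5) order_trans by blast
  then have cd: "c \<le> d" using x0 by simp
  have a1: "a \<le> 1" and b1: "1 \<le> b" using assms(5,6) ea eb by auto
  have lowT: "\<forall>x. c * (x \<bullet> x) \<le> (transpose R *v x) \<bullet> (transpose R *v x)" using fT(4) Tq by metis
  have upT: "\<forall>x. (transpose R *v x) \<bullet> (transpose R *v x) \<le> d * (x \<bullet> x)" using fT(5) Tq by metis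
  have h7: "(0 < \<zeta> \<and> \<zeta> < min a (c / (b + c))) \<or> b + d \<le> \<zeta>" using assms(7) unfolding ea eb ec ed .
  have goal: "invertible (\<zeta> *\<^sub>R mat 1 - At) \<and>
     (pos_def ((1 - \<zeta>) *\<^sub>R (R ** matrix_inv (\<zeta> *\<^sub>R mat 1 - At) ** transpose R) + \<zeta> *\<^sub>R mat 1) \<or>
      neg_def ((1 - \<zeta>) *\<^sub>R (R ** matrix_inv (\<zeta> *\<^sub>R mat 1 - At) ** transpose R) + \<zeta> *\<^sub>R mat 1))"
  proof (cases "b + d \<le> \<zeta>")
    case True
    show ?thesis using case2[OF At_sym fA(5) upT True b1] cd c0 by auto
  next
    case False
    then have z: "0 < \<zeta>" "\<zeta> < a" "\<zeta> < c / (b + c)" using h7 by auto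
    have "0 < b + c" using a1 b1 c0 by simp
    then have "\<zeta> * (b + c) < c" using z(3) by (simp add: less_divide_eq)
    then show ?thesis using case1[OF At_sym fA(4) fA(5) lowT z(1,2) _ a1] by auto
  qed
  show ?thesis unfolding Let_def At_def[symmetric] R_def[symmetric] using goal .
qed

end
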